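(* Let $n\ge 1$ and let $\|\cdot\|$ be a norm on $\mathbb{R}^n$ that is $C^\infty$ on $\mathbb{R}^n\setminus\{0\}$. Let $G^n$ be the group (under composition, $\mathbf{Y}_{g_1g_2}=\mathbf{Y}_{g_1}\circ\mathbf{Y}_{g_2}$) of all $C^\infty$ diffeomorphisms $\mathbf{Y}:\mathbb{R}^n\setminus\{0\}\to\mathbb{R}^n\setminus\{0\}$ with $\mathbf{Y}(\lambda\mathbf{x})=\lambda\mathbf{Y}(\mathbf{x})$ for all $\mathbf{x}\ne0$ and $\lambda\in\mathbb{R}\setminus\{0\}$. Let $N^n\subset G^n$ consist of the elements with $\mathbf{Y}_g(\mathbf{x})=\mathbf{x}\,r_g(\mathbf{x})$, where $r_g:\mathbb{R}^n\setminus\{0\}\to(0,\infty)$ is $C^\infty$ with $r_g(\lambda\mathbf{x})=r_g(\mathbf{x})$ for all $\lambda\in\mathbb{R}\setminus\{0\}$, and let $H^n\subset G^n$ consist of the elements $h$ with $\|\mathbf{Y}_h(\mathbf{x})\|=\|\mathbf{x}\|$ and $\mathbf{Y}_h(-\mathbf{x})=-\mathbf{Y}_h(\mathbf{x})$ for all $\mathbf{x}\ne0$. Then $G^n$ is the (internal) semidirect product $G^n=N^n\rtimes H^n$ of the abelian normal subgroup $N^n$ and the subgroup $H^n$: that is, $N^n$ is an abelian normal subgroup, $H^n$ is a subgroup, $N^n\cap H^n=\{e\}$ and $G^n=N^nH^n$.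
   Context: $G^n$ is the group of Thermodynamic Coordinate Transformations (homogeneous degree-one diffeomorphisms of $\mathbb{R}^n\setminus\{0\}$); elements are identified with their maps and the group law is composition. *)

theory Defs
  imports "HOL-Analysis.Analysis" "HOL-Algebra.Algebra"
begin

text \<open>C-infinity on an open set S: there is a family D of iterated directional
derivatives, D [] = f on S, and for every list vs and x in S the map D vs is
Frechet differentiable at x with derivative v |-> D (v # vs) x.
(Existence of Frechet derivatives of every order; continuity follows.)\<close>
definition smooth_on :: "('a::real_normed_vector) set \<Rightarrow> ('a \<Rightarrow> 'b::real_normed_vector) \<Rightarrow> bool" where
  "smooth_on S f \<longleftrightarrow> open S \<and>
     (\<exists>D :: 'a list \<Rightarrow> 'a \<Rightarrow> 'b.
        (\<forall>x\<in>S. D [] x = f x) \<and>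
        (\<forall>vs. \<forall>x\<in>S. (D vs has_derivative (\<lambda>v. D (v # vs) x)) (at x)))"

definition punctured :: "'a::real_normed_vector set" where
  "punctured = - {0}"

definition diffeo_on :: "('a::real_normed_vector) set \<Rightarrow> ('a \<Rightarrow> 'a) \<Rightarrow> bool" where
  "diffeo_on S Y \<longleftrightarrow> bij_betw Y S S \<and> smooth_on S Y \<and> smooth_on S (inv_into S Y)"

text \<open>Carrier of G^n: homogeneous degree-one C-infinity diffeomorphisms of R^n minus 0,
 extended by Y 0 = 0 so that elements are identified with total maps.\<close>
definition TCT :: "('a::real_normed_vector \<Rightarrow> 'a) set" where
  "TCT = {Y. diffeo_on punctured Y \<and> Y 0 = 0 \<and>
           (\<forall>x lam. x \<noteq> 0 \<longrightarrow> lam \<noteq> 0 \<longrightarrow> Y (lam *\<^sub>R x) = lam *\<^sub>R Y x)}"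

definition TCT_group :: "('a::real_normed_vector \<Rightarrow> 'a) monoid" where
  "TCT_group = \<lparr>carrier = TCT, mult = (\<circ>), one = id\<rparr>"

definition TCT_N :: "('a::real_normed_vector \<Rightarrow> 'a) set" where
  "TCT_N = {Y \<in> TCT. \<exists>r :: 'a \<Rightarrow> real. smooth_on punctured r \<and>
              (\<forall>x. x \<noteq> 0 \<longrightarrow> r x > 0) \<and>
              (\<forall>x lam. x \<noteq> 0 \<longrightarrow> lam \<noteq> 0 \<longrightarrow> r (lam *\<^sub>R x) = r x) \<and>
              (\<forall>x. x \<noteq> 0 \<longrightarrow> Y x = r x *\<^sub>R x)}"

definition TCT_H :: "('a::real_normed_vector \<Rightarrow> real) \<Rightarrow> ('a \<Rightarrow> 'a) set" where
  "TCT_H nrm = {Y \<in> TCT. \<forall>x. x \<noteq> 0 \<longrightarrow> nrm (Y x) = nrm x \<and> Y (- x) = - Y x}"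

definition is_norm :: "('a::real_vector \<Rightarrow> real) \<Rightarrow> bool" where
  "is_norm nrm \<longleftrightarrow> (\<forall>x. nrm x = 0 \<longleftrightarrow> x = 0) \<and> (\<forall>c x. nrm (c *\<^sub>R x) = \<bar>c\<bar> * nrm x)
      \<and> (\<forall>x y. nrm (x + y) \<le> nrm x + nrm y)"

end

theory Submission
  imports Defs
begin

lemma smooth_on_open: "smooth_on S f \<Longrightarrow> open S"
  by (simp add: smooth_on_def)

lemma smooth_on_cong:
  assumes "smooth_on S f" "\<And>x. x \<in> S \<Longrightarrow> f x = g x" shows "smooth_on S g"
proof -
  obtain D where "open S" "\<forall>x\<in>S. D [] x = f x"
    "\<forall>vs. \<forall>x\<in>S. (D vs has_derivative (\<lambda>v. D (v # vs) x)) (at x)"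
    using assms(1) unfolding smooth_on_def by blast
  then show ?thesis unfolding smooth_on_def using assms(2) by (intro conjI exI[of _ D]) auto
qed

lemma smooth_on_unfold:
  assumes "smooth_on S f"
  shows "\<exists>G. (\<forall>x\<in>S. (f has_derivative G x) (at x)) \<and> (\<forall>v. smooth_on S (\<lambda>x. G x v))"
proof -
  from assms obtain D where S: "open S" and D0: "\<forall>x\<in>S. D [] x = f x"
    and DD: "\<forall>vs. \<forall>x\<in>S. (D vs has_derivative (\<lambda>v. D (v # vs) x)) (at x)"
    unfolding smooth_on_def by blast
  show ?thesis
  proof (intro exI[of _ "\<lambda>x v. D [v] x"] conjI ballI allI)
    fix x assume x: "x \<in> S"
    show "(f has_derivative (\<lambda>v. D [v] x)) (at x)"
      using has_derivative_transform_within_open[OF DD[THEN spec[of _ "[]"], THEN bspec, OF x] S x, of f] x D0 by simp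
  next
    fix v
    show "smooth_on S (\<lambda>x. D [v] x)"
      unfolding smooth_on_def
      using S DD by (intro conjI exI[of _ "\<lambda>ws. D (ws @ [v])"]) auto
  qed
qed

lemma smooth_coinduct:
  assumes S: "open S" and Pf: "P f"
    and step: "\<And>g. P g \<Longrightarrow> \<exists>G. (\<forall>x\<in>S. (g has_derivative G x) (at x)) \<and> (\<forall>v. \<exists>h. P h \<and> (\<forall>x\<in>S. h x = G x v))"
  shows "smooth_on S f"
proof -
  have "\<forall>g. \<exists>G. P g \<longrightarrow> (\<forall>x\<in>S. (g has_derivative G x) (at x)) \<and> (\<forall>v. \<exists>h. P h \<and> (\<forall>x\<in>S. h x = G x v))"
    using step by blast
  from choice[OF this] obtain G where G: "\<And>g. P g \<Longrightarrow> (\<forall>x\<in>S. (g has_derivative G g x) (at x)) \<and> (\<forall>v. \<exists>h. P h \<and> (\<forall>x\<in>S. h x = G g x v))"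
    by blast
  have "\<forall>gv. \<exists>h. P (fst gv) \<longrightarrow> P h \<and> (\<forall>x\<in>S. h x = G (fst gv) x (snd gv))"
    using G by blast
  from choice[OF this] obtain H' where H': "\<And>gv. P (fst gv) \<Longrightarrow> P (H' gv) \<and> (\<forall>x\<in>S. H' gv x = G (fst gv) x (snd gv))"
    by blast
  define H where "H g v = H' (g, v)" for g v
  have H: "\<And>g v. P g \<Longrightarrow> P (H g v) \<and> (\<forall>x\<in>S. H g v x = G g x v)"
    using H' unfolding H_def by (metis fst_conv snd_conv)
  define D where "D = rec_list f (\<lambda>v vs d. H d v)"
  have D0: "D [] = f" and DC: "\<And>v vs. D (v # vs) = H (D vs) v" by (simp_all add: D_def)
  have PD: "P (D vs)" for vs
    by (induction vs) (simp_all add: D0 DC Pf H)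
  show ?thesis
    unfolding smooth_on_def
  proof (intro conjI S exI[of _ D] ballI allI)
    fix x assume "x \<in> S" then show "D [] x = f x" by (simp add: D0)
  next
    fix vs x assume x: "x \<in> S"
    have "(D vs has_derivative G (D vs) x) (at x)" using G[OF PD] x by blast
    moreover have "G (D vs) x = (\<lambda>v. D (v # vs) x)"
      by (rule ext) (use H[OF PD] x in \<open>simp add: DC\<close>)
    ultimately show "(D vs has_derivative (\<lambda>v. D (v # vs) x)) (at x)" by simp
  qed
qed

lemma smooth_coinduct_sum:
  assumes S: "open S" and Phs: "list_all P hs"
    and step: "\<And>g. P g \<Longrightarrow> \<exists>G. (\<forall>x\<in>S. (g has_derivative G x) (at x)) \<and>
        (\<forall>v. \<exists>ks. list_all P ks \<and> (\<forall>x\<in>S. G x v = (\<Sum>k\<leftarrow>ks. k x)))"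
  shows "smooth_on S (\<lambda>x. \<Sum>h\<leftarrow>hs. h x)"
proof -
  define Q where "Q g \<longleftrightarrow> (\<exists>hs. list_all P hs \<and> (\<forall>x\<in>S. g x = (\<Sum>h\<leftarrow>hs. h x)))" for g
  have sumd: "list_all P hs \<Longrightarrow> \<exists>G. (\<forall>x\<in>S. ((\<lambda>x. \<Sum>h\<leftarrow>hs. h x) has_derivative G x) (at x)) \<and>
        (\<forall>v. \<exists>ks. list_all P ks \<and> (\<forall>x\<in>S. G x v = (\<Sum>k\<leftarrow>ks. k x)))" for hs
  proof (induction hs)
    case Nil
    show ?case by (intro exI[of _ "\<lambda>x v. 0"] conjI allI exI[of _ "[]"]) auto
  next
    case (Cons h hs)
    have Ph: "P h" using Cons.prems by simp
    obtain G1 where G1: "\<forall>x\<in>S. (h has_derivative G1 x) (at x)"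
      "\<forall>v. \<exists>ks. list_all P ks \<and> (\<forall>x\<in>S. G1 x v = (\<Sum>k\<leftarrow>ks. k x))"
      using step[OF Ph] by blast
    obtain G2 where G2: "\<forall>x\<in>S. ((\<lambda>x. \<Sum>h\<leftarrow>hs. h x) has_derivative G2 x) (at x)"
      "\<forall>v. \<exists>ks. list_all P ks \<and> (\<forall>x\<in>S. G2 x v = (\<Sum>k\<leftarrow>ks. k x))"
      using Cons.IH Cons.prems by (metis list.pred_inject(2))
    show ?case
    proof (intro exI[of _ "\<lambda>x v. G1 x v + G2 x v"] conjI ballI allI)
      fix x assume "x \<in> S"
      then show "((\<lambda>x. \<Sum>h\<leftarrow>h # hs. h x) has_derivative (\<lambda>v. G1 x v + G2 x v)) (at x)"
        using G1 G2 by (simp add: has_derivative_add)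
    next
      fix v
      obtain ks1 where "list_all P ks1" "\<forall>x\<in>S. G1 x v = (\<Sum>k\<leftarrow>ks1. k x)" using G1 by blast
      moreover obtain ks2 where "list_all P ks2" "\<forall>x\<in>S. G2 x v = (\<Sum>k\<leftarrow>ks2. k x)" using G2 by blast
      ultimately show "\<exists>ks. list_all P ks \<and> (\<forall>x\<in>S. G1 x v + G2 x v = (\<Sum>k\<leftarrow>ks. k x))"
        by (intro exI[of _ "ks1 @ ks2"]) auto
    qed
  qed
  show ?thesis
  proof (rule smooth_coinduct[where P=Q, OF S])
    show "Q (\<lambda>x. \<Sum>h\<leftarrow>hs. h x)" using Phs Q_def by blast
  next
    fix g assume "Q g"
    then obtain hs where hs: "list_all P hs" "\<forall>x\<in>S. g x = (\<Sum>h\<leftarrow>hs. h x)" by (auto simp: Q_def)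
    obtain G where G: "\<forall>x\<in>S. ((\<lambda>x. \<Sum>h\<leftarrow>hs. h x) has_derivative G x) (at x)"
      "\<forall>v. \<exists>ks. list_all P ks \<and> (\<forall>x\<in>S. G x v = (\<Sum>k\<leftarrow>ks. k x))"
      using sumd[OF hs(1)] by blast
    show "\<exists>G. (\<forall>x\<in>S. (g has_derivative G x) (at x)) \<and> (\<forall>v. \<exists>h. Q h \<and> (\<forall>x\<in>S. h x = G x v))"
    proof (intro exI[of _ G] conjI ballI allI)
      fix x assume x: "x \<in> S"
      show "(g has_derivative G x) (at x)"
        using has_derivative_transform_within_open[OF G(1)[rule_format, OF x] S x, of g] hs(2) by simp
    next
      fix v show "\<exists>h. Q h \<and> (\<forall>x\<in>S. h x = G x v)"
        using G(2) by (intro exI[of _ "\<lambda>x. G x v"]) (auto simp: Q_def)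
    qed
  qed
qed

lemma smooth_const: "open S \<Longrightarrow> smooth_on S (\<lambda>x. c)"
proof (rule smooth_coinduct[where P="\<lambda>g. g = (\<lambda>x. c) \<or> g = (\<lambda>x. 0)"])
  fix g :: "'a \<Rightarrow> 'b" assume "g = (\<lambda>x. c) \<or> g = (\<lambda>x. 0)"
  then show "\<exists>G. (\<forall>x\<in>S. (g has_derivative G x) (at x)) \<and> (\<forall>v. \<exists>h. (h = (\<lambda>x. c) \<or> h = (\<lambda>x. 0)) \<and> (\<forall>x\<in>S. h x = G x v))"
    by (intro exI[of _ "\<lambda>x v. 0"] conjI allI exI[of _ "\<lambda>x. 0"]) auto
qed auto

lemma smooth_ident: "open S \<Longrightarrow> smooth_on S (\<lambda>x. x)"
proof (rule smooth_coinduct[where P="\<lambda>g. g = (\<lambda>x. x) \<or> (\<exists>c. g = (\<lambda>x. c))"])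
  fix g :: "'a \<Rightarrow> 'a" assume "g = (\<lambda>x. x) \<or> (\<exists>c. g = (\<lambda>x. c))"
  then show "\<exists>G. (\<forall>x\<in>S. (g has_derivative G x) (at x)) \<and> (\<forall>v. \<exists>h. (h = (\<lambda>x. x) \<or> (\<exists>c. h = (\<lambda>x. c))) \<and> (\<forall>x\<in>S. h x = G x v))"
  proof
    assume "g = (\<lambda>x. x)" then show ?thesis
      by (intro exI[of _ "\<lambda>x v. v"] conjI allI) auto
  next
    assume "\<exists>c. g = (\<lambda>x. c)" then show ?thesis
      by (intro exI[of _ "\<lambda>x v. 0"] conjI allI) auto
  qed
qed auto

lemma smooth_step:
  assumes "smooth_on S f"
  shows "\<exists>G. (\<forall>x\<in>S. (f has_derivative G x) (at x)) \<and> (\<forall>v. \<exists>ks. list_all (smooth_on S) ks \<and> (\<forall>x\<in>S. G x v = (\<Sum>k\<leftarrow>ks. k x)))"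
proof -
  obtain G where "\<forall>x\<in>S. (f has_derivative G x) (at x)" "\<forall>v. smooth_on S (\<lambda>x. G x v)"
    using smooth_on_unfold[OF assms] by blast
  then show ?thesis by (intro exI[of _ G] conjI allI exI[of _ "[\<lambda>x. G x v]" for v]) auto
qed

lemma smooth_add:
  assumes f: "smooth_on S f" and g: "smooth_on S g"
  shows "smooth_on S (\<lambda>x. f x + g x)"
proof -
  have "list_all (smooth_on S) [f,g]" using f g by simp
  from smooth_coinduct_sum[OF smooth_on_open[OF f] this smooth_step]
  have "smooth_on S (\<lambda>x. \<Sum>h\<leftarrow>[f,g]. h x)" .
  then show ?thesis by simp
qed

lemma smooth_linear:
  assumes L: "bounded_linear L" and f: "smooth_on S f"
  shows "smooth_on S (\<lambda>x. L (f x))"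
proof (rule smooth_coinduct[where P="\<lambda>g. \<exists>f. smooth_on S f \<and> g = (\<lambda>x. L (f x))"])
  show "open S" using smooth_on_open[OF f] .
  fix g assume "\<exists>f. smooth_on S f \<and> g = (\<lambda>x. L (f x))"
  then obtain f where f: "smooth_on S f" and g: "g = (\<lambda>x. L (f x))" by blast
  obtain G where G: "\<forall>x\<in>S. (f has_derivative G x) (at x)" "\<forall>v. smooth_on S (\<lambda>x. G x v)"
    using smooth_on_unfold[OF f] by blast
  show "\<exists>G. (\<forall>x\<in>S. (g has_derivative G x) (at x)) \<and> (\<forall>v. \<exists>h. (\<exists>f. smooth_on S f \<and> h = (\<lambda>x. L (f x))) \<and> (\<forall>x\<in>S. h x = G x v))"
    using G unfolding g
    by (intro exI[of _ "\<lambda>x v. L (G x v)"] conjI allI ballI exI[of _ "\<lambda>x. L (G x v)" for v])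
       (auto intro: bounded_linear.has_derivative[OF L])
qed (use f in auto)

lemma smooth_scaleR:
  fixes a :: "'a::real_normed_vector \<Rightarrow> real" and f :: "'a \<Rightarrow> 'b::real_normed_vector"
  assumes a: "smooth_on S a" and f: "smooth_on S f"
  shows "smooth_on S (\<lambda>x. a x *\<^sub>R f x)"
proof -
  define P where "P g \<longleftrightarrow> (\<exists>a f. smooth_on S a \<and> smooth_on S f \<and> g = (\<lambda>x. a x *\<^sub>R f x))" for g :: "'a \<Rightarrow> 'b"
  have "smooth_on S (\<lambda>x. \<Sum>h\<leftarrow>[\<lambda>x. a x *\<^sub>R f x]. h x)"
  proof (rule smooth_coinduct_sum[where P=P])
    show "open S" using smooth_on_open[OF f] .
    show "list_all P [\<lambda>x. a x *\<^sub>R f x]" using a f by (auto simp: P_def)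
    fix g assume "P g"
    then obtain a f where a: "smooth_on S a" and f: "smooth_on S f" and g: "g = (\<lambda>x. a x *\<^sub>R f x)"
      by (auto simp: P_def)
    obtain Ga where Ga: "\<forall>x\<in>S. (a has_derivative Ga x) (at x)" "\<forall>v. smooth_on S (\<lambda>x. Ga x v)"
      using smooth_on_unfold[OF a] by blast
    obtain Gf where Gf: "\<forall>x\<in>S. (f has_derivative Gf x) (at x)" "\<forall>v. smooth_on S (\<lambda>x. Gf x v)"
      using smooth_on_unfold[OF f] by blast
    show "\<exists>G. (\<forall>x\<in>S. (g has_derivative G x) (at x)) \<and>
        (\<forall>v. \<exists>ks. list_all P ks \<and> (\<forall>x\<in>S. G x v = (\<Sum>k\<leftarrow>ks. k x)))"
    proof (intro exI[of _ "\<lambda>x v. a x *\<^sub>R Gf x v + Ga x v *\<^sub>R f x"] conjI ballI allI)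
      fix x assume "x \<in> S"
      then show "(g has_derivative (\<lambda>v. a x *\<^sub>R Gf x v + Ga x v *\<^sub>R f x)) (at x)"
        unfolding g using Ga Gf by (auto intro: has_derivative_scaleR)
    next
      fix v
      show "\<exists>ks. list_all P ks \<and> (\<forall>x\<in>S. a x *\<^sub>R Gf x v + Ga x v *\<^sub>R f x = (\<Sum>k\<leftarrow>ks. k x))"
      proof (intro exI[of _ "[\<lambda>x. a x *\<^sub>R Gf x v, \<lambda>x. Ga x v *\<^sub>R f x]"] conjI)
        have "P (\<lambda>x. a x *\<^sub>R Gf x v)" unfolding P_def using a Gf(2) by blast
        moreover have "P (\<lambda>x. Ga x v *\<^sub>R f x)" unfolding P_def using f Ga(2) by blast
        ultimately show "list_all P [\<lambda>x. a x *\<^sub>R Gf x v, \<lambda>x. Ga x v *\<^sub>R f x]" by simp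
      qed simp
    qed
  qed
  then show ?thesis by simp
qed

lemma smooth_mult:
  fixes a b :: "'a::real_normed_vector \<Rightarrow> real"
  assumes a: "smooth_on S a" and b: "smooth_on S b"
  shows "smooth_on S (\<lambda>x. a x * b x)"
  using smooth_scaleR[OF a b] by simp

lemma inv_coeff_eq: "(b::real) * (real k * (- (i * g * i)) * i ^ (k - 1)) = (- real k * b * g) * i ^ Suc k"
  by (cases k) (simp_all add: algebra_simps)

lemma smooth_inverse:
  fixes a :: "'a::real_normed_vector \<Rightarrow> real"
  assumes a: "smooth_on S a" and nz: "\<And>x. x \<in> S \<Longrightarrow> a x \<noteq> 0"
  shows "smooth_on S (\<lambda>x. inverse (a x))"
proof -
  have S: "open S" using smooth_on_open[OF a] .
  define P where "P g \<longleftrightarrow> (\<exists>b a k. smooth_on S b \<and> smooth_on S a \<and> (\<forall>x\<in>S. a x \<noteq> 0) \<and>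
      g = (\<lambda>x. b x * inverse (a x) ^ k))" for g :: "'a \<Rightarrow> real"
  have "smooth_on S (\<lambda>x. \<Sum>h\<leftarrow>[\<lambda>x. 1 * inverse (a x) ^ 1]. h x)"
  proof (rule smooth_coinduct_sum[where P=P, OF S])
    have "P (\<lambda>x. 1 * inverse (a x) ^ 1)"
      unfolding P_def using a nz smooth_const[OF S, of 1] by blast
    then show "list_all P [\<lambda>x. 1 * inverse (a x) ^ 1]" by simp
    fix g assume "P g"
    then obtain b a k where b: "smooth_on S b" and a: "smooth_on S a" and nz: "\<forall>x\<in>S. a x \<noteq> 0"
      and g: "g = (\<lambda>x. b x * inverse (a x) ^ k)" by (auto simp: P_def)
    obtain Ga where Ga: "\<forall>x\<in>S. (a has_derivative Ga x) (at x)" "\<forall>v. smooth_on S (\<lambda>x. Ga x v)"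
      using smooth_on_unfold[OF a] by blast
    obtain Gb where Gb: "\<forall>x\<in>S. (b has_derivative Gb x) (at x)" "\<forall>v. smooth_on S (\<lambda>x. Gb x v)"
      using smooth_on_unfold[OF b] by blast
    define G where "G x h = b x * (of_nat k * (- (inverse (a x) * Ga x h * inverse (a x))) * inverse (a x) ^ (k - 1))
        + Gb x h * inverse (a x) ^ k" for x h
    show "\<exists>G. (\<forall>x\<in>S. (g has_derivative G x) (at x)) \<and>
        (\<forall>v. \<exists>ks. list_all P ks \<and> (\<forall>x\<in>S. G x v = (\<Sum>k\<leftarrow>ks. k x)))"
    proof (intro exI[of _ G] conjI ballI allI)
      fix x assume x: "x \<in> S"
      have d1: "((\<lambda>x. inverse (a x)) has_derivative (\<lambda>h. - (inverse (a x) * Ga x h * inverse (a x)))) (at x)"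
        using Deriv.has_derivative_inverse[OF nz[rule_format, OF x] Ga(1)[rule_format, OF x]] .
      note d2 = has_derivative_power[OF d1, of k]
      show "(g has_derivative G x) (at x)"
        unfolding g G_def[abs_def]
        using has_derivative_mult[OF Gb(1)[rule_format, OF x] d2] by simp
    next
      fix v
      have c: "smooth_on S (\<lambda>x. - real k * b x * Ga x v)"
        by (intro smooth_mult smooth_const S b Ga(2)[rule_format])
      have p1: "P (\<lambda>x. (- real k * b x * Ga x v) * inverse (a x) ^ Suc k)"
        unfolding P_def using c a nz by blast
      have p2: "P (\<lambda>x. Gb x v * inverse (a x) ^ k)"
        unfolding P_def using Gb(2) a nz by blast
      show "\<exists>ks. list_all P ks \<and> (\<forall>x\<in>S. G x v = (\<Sum>k\<leftarrow>ks. k x))"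
        using p1 p2
        by (intro exI[of _ "[\<lambda>x. (- real k * b x * Ga x v) * inverse (a x) ^ Suc k, \<lambda>x. Gb x v * inverse (a x) ^ k]"])
           (unfold G_def inv_coeff_eq, simp)
    qed
  qed
  then show ?thesis by simp
qed

lemma linear_expand:
  fixes L :: "'b::euclidean_space \<Rightarrow> 'c::real_normed_vector"
  assumes "linear L"
  shows "L w = (\<Sum>i\<in>Basis. (w \<bullet> i) *\<^sub>R L i)"
proof -
  have "L w = L (\<Sum>i\<in>Basis. (w \<bullet> i) *\<^sub>R i)" by (simp add: euclidean_representation)
  also have "\<dots> = (\<Sum>i\<in>Basis. (w \<bullet> i) *\<^sub>R L i)"
    by (simp add: linear_sum[OF assms] linear_cmul[OF assms] o_def)
  finally show ?thesis .
qed

lemma smooth_compose: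
  fixes g :: "'a::real_normed_vector \<Rightarrow> 'b::euclidean_space" and F :: "'b \<Rightarrow> 'c::real_normed_vector"
  assumes F: "smooth_on T F" and g: "smooth_on S g" and gS: "\<And>x. x \<in> S \<Longrightarrow> g x \<in> T"
  shows "smooth_on S (\<lambda>x. F (g x))"
proof -
  have S: "open S" using smooth_on_open[OF g] .
  have T: "open T" using smooth_on_open[OF F] .
  obtain Gg where Gg: "\<forall>x\<in>S. (g has_derivative Gg x) (at x)" "\<forall>v. smooth_on S (\<lambda>x. Gg x v)"
    using smooth_on_unfold[OF g] by blast
  obtain bs where bs: "set bs = (Basis :: 'b set)" "distinct bs"
    using finite_distinct_list[OF finite_Basis] by blast
  define P where "P h \<longleftrightarrow> (\<exists>c F. smooth_on S c \<and> smooth_on T F \<and> h = (\<lambda>x. c x *\<^sub>R F (g x)))"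
    for h :: "'a \<Rightarrow> 'c"
  have "smooth_on S (\<lambda>x. \<Sum>h\<leftarrow>[\<lambda>x. 1 *\<^sub>R F (g x)]. h x)"
  proof (rule smooth_coinduct_sum[where P=P, OF S])
    have "P (\<lambda>x. 1 *\<^sub>R F (g x))"
      unfolding P_def using F smooth_const[OF S, of 1] by blast
    then show "list_all P [\<lambda>x. 1 *\<^sub>R F (g x)]" by simp
    fix h assume "P h"
    then obtain c F where c: "smooth_on S c" and F: "smooth_on T F"
      and h: "h = (\<lambda>x. c x *\<^sub>R F (g x))" by (auto simp: P_def)
    obtain Gc where Gc: "\<forall>x\<in>S. (c has_derivative Gc x) (at x)" "\<forall>v. smooth_on S (\<lambda>x. Gc x v)"
      using smooth_on_unfold[OF c] by blast
    obtain GF where GF: "\<forall>y\<in>T. (F has_derivative GF y) (at y)" "\<forall>v. smooth_on T (\<lambda>y. GF y v)"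
      using smooth_on_unfold[OF F] by blast
    define G where "G x v = c x *\<^sub>R GF (g x) (Gg x v) + Gc x v *\<^sub>R F (g x)" for x v
    show "\<exists>G. (\<forall>x\<in>S. (h has_derivative G x) (at x)) \<and>
        (\<forall>v. \<exists>ks. list_all P ks \<and> (\<forall>x\<in>S. G x v = (\<Sum>k\<leftarrow>ks. k x)))"
    proof (intro exI[of _ G] conjI ballI allI)
      fix x assume x: "x \<in> S"
      have "((F \<circ> g) has_derivative (GF (g x) \<circ> Gg x)) (at x)"
        using diff_chain_at[of g "Gg x" x F "GF (g x)"] Gg(1) GF(1) x gS by blast
      then have d: "((\<lambda>x. F (g x)) has_derivative (\<lambda>v. GF (g x) (Gg x v))) (at x)"
        by (simp add: o_def)
      show "(h has_derivative G x) (at x)"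
        unfolding h G_def[abs_def]
        using has_derivative_scaleR[OF Gc(1)[rule_format, OF x] d] by simp
    next
      fix v
      define \<phi> where "\<phi> i x = (c x * (Gg x v \<bullet> i)) *\<^sub>R GF (g x) i" for i x
      define ks where "ks = map \<phi> bs @ [\<lambda>x. Gc x v *\<^sub>R F (g x)]"
      have "list_all P ks"
      proof -
        have "P (\<phi> i)" for i
        proof -
          have "smooth_on S (\<lambda>x. c x * (Gg x v \<bullet> i))"
            by (intro smooth_mult c smooth_linear[OF bounded_linear_inner_left] Gg(2)[rule_format])
          then show ?thesis unfolding P_def \<phi>_def using GF(2) by blast
        qed
        moreover have "P (\<lambda>x. Gc x v *\<^sub>R F (g x))" unfolding P_def using Gc(2) F by blast
        ultimately show ?thesis by (simp add: ks_def list_all_iff)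
      qed
      moreover have "\<forall>x\<in>S. G x v = (\<Sum>k\<leftarrow>ks. k x)"
      proof
        fix x assume x: "x \<in> S"
        have lin: "linear (GF (g x))" using GF(1) gS x has_derivative_linear by blast
        have "(\<Sum>k\<leftarrow>ks. k x) = (\<Sum>i\<leftarrow>bs. \<phi> i x) + Gc x v *\<^sub>R F (g x)"
          by (simp add: ks_def o_def)
        also have "(\<Sum>i\<leftarrow>bs. \<phi> i x) = (\<Sum>i\<in>Basis. \<phi> i x)"
          using sum_list_distinct_conv_sum_set[OF bs(2), of "\<lambda>i. \<phi> i x"] bs(1) by simp
        also have "\<dots> = c x *\<^sub>R GF (g x) (Gg x v)"
          by (simp add: \<phi>_def linear_expand[OF lin, of "Gg x v"] scaleR_sum_right)
        finally show "G x v = (\<Sum>k\<leftarrow>ks. k x)" by (simp add: G_def)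
      qed
      ultimately show "\<exists>ks. list_all P ks \<and> (\<forall>x\<in>S. G x v = (\<Sum>k\<leftarrow>ks. k x))" by blast
    qed
  qed
  then show ?thesis by simp
qed

lemma open_punctured: "open (punctured :: 'a::real_normed_vector set)"
  by (simp add: punctured_def open_Compl)

lemma mem_punctured[simp]: "x \<in> punctured \<longleftrightarrow> x \<noteq> 0"
  by (simp add: punctured_def)

definition tinv :: "('a::real_normed_vector \<Rightarrow> 'a) \<Rightarrow> 'a \<Rightarrow> 'a" where
  "tinv Y = (\<lambda>x. if x = 0 then 0 else inv_into punctured Y x)"

lemma TCT_D:
  assumes "Y \<in> TCT"
  shows "bij_betw Y punctured punctured" "smooth_on punctured Y" "smooth_on punctured (inv_into punctured Y)"
    "Y 0 = 0" "\<And>x lam. x \<noteq> 0 \<Longrightarrow> lam \<noteq> 0 \<Longrightarrow> Y (lam *\<^sub>R x) = lam *\<^sub>R Y x"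
  using assms by (auto simp: TCT_def diffeo_on_def)

lemma TCT_nz: "Y \<in> TCT \<Longrightarrow> x \<noteq> 0 \<Longrightarrow> Y x \<noteq> 0"
  using bij_betw_apply[OF TCT_D(1)] by fastforce

lemma TCT_neg: "Y \<in> TCT \<Longrightarrow> Y (- x) = - Y x"
  using TCT_D(5)[of Y x "-1"] TCT_D(4)[of Y] by (cases "x = 0") auto

lemma TCT_I:
  assumes "bij_betw Y punctured punctured" "smooth_on punctured Y" "smooth_on punctured (inv_into punctured Y)"
    "Y 0 = 0" "\<And>x lam. x \<noteq> 0 \<Longrightarrow> lam \<noteq> 0 \<Longrightarrow> Y (lam *\<^sub>R x) = lam *\<^sub>R Y x"
  shows "Y \<in> TCT"
  using assms by (auto simp: TCT_def diffeo_on_def)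

lemma tinv_props:
  assumes Y: "Y \<in> TCT"
  shows "\<And>w. tinv Y (Y w) = w" "\<And>w. Y (tinv Y w) = w" "\<And>w. w \<noteq> 0 \<Longrightarrow> tinv Y w \<noteq> 0"
proof -
  have b: "bij_betw Y punctured punctured" using TCT_D(1)[OF Y] .
  have inj: "inj_on Y punctured" using b bij_betw_imp_inj_on by blast
  have im: "Y ` punctured = punctured" using b bij_betw_imp_surj_on by blast
  fix w
  show "tinv Y (Y w) = w"
  proof (cases "w = 0")
    case True then show ?thesis using TCT_D(4)[OF Y] by (simp add: tinv_def)
  next
    case False
    then have "Y w \<noteq> 0" using TCT_nz[OF Y] by blast
    then show ?thesis using False inv_into_f_f[OF inj, of w] by (simp add: tinv_def)
  qed
  show "Y (tinv Y w) = w"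
  proof (cases "w = 0")
    case True then show ?thesis using TCT_D(4)[OF Y] by (simp add: tinv_def)
  next
    case False
    then have "w \<in> Y ` punctured" using im by simp
    then show ?thesis using False f_inv_into_f[of w Y punctured] by (simp add: tinv_def)
  qed
next
  fix w :: 'a assume w: "w \<noteq> 0"
  have b: "bij_betw Y punctured punctured" using TCT_D(1)[OF Y] .
  have "inv_into punctured Y w \<in> punctured"
    using bij_betw_apply[OF bij_betw_inv_into[OF b]] w by simp
  then show "tinv Y w \<noteq> 0" using w by (simp add: tinv_def)
qed

lemma tinv_TCT:
  assumes Y: "(Y :: 'a::real_normed_vector \<Rightarrow> 'a) \<in> TCT"
  shows "tinv Y \<in> TCT"
proof (rule TCT_I)
  have b: "bij_betw Y punctured punctured" using TCT_D(1)[OF Y] .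
  have eq: "\<And>x. x \<in> punctured \<Longrightarrow> inv_into punctured Y x = tinv Y x" by (simp add: tinv_def)
  show bt: "bij_betw (tinv Y) punctured punctured"
    using bij_betw_cong[of punctured "inv_into punctured Y" "tinv Y"] bij_betw_inv_into[OF b] eq by blast
  show "smooth_on punctured (tinv Y)" using smooth_on_cong[OF TCT_D(3)[OF Y] eq] .
  have inj: "inj_on (tinv Y) punctured" using bt bij_betw_imp_inj_on by blast
  have "\<And>y. y \<in> punctured \<Longrightarrow> Y y = inv_into punctured (tinv Y) y"
    using inv_into_f_eq[OF inj] tinv_props[OF Y] TCT_nz[OF Y] by (metis mem_punctured)
  then show "smooth_on punctured (inv_into punctured (tinv Y))" using smooth_on_cong[OF TCT_D(2)[OF Y]] by blast
  show "tinv Y 0 = 0" by (simp add: tinv_def)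
  fix x :: 'a and lam :: real assume x: "x \<noteq> 0" and lam: "lam \<noteq> 0"
  have "tinv Y (lam *\<^sub>R x) = tinv Y (lam *\<^sub>R Y (tinv Y x))" using tinv_props(2)[OF Y] by simp
  also have "\<dots> = tinv Y (Y (lam *\<^sub>R tinv Y x))"
    using TCT_D(5)[OF Y tinv_props(3)[OF Y x] lam] by simp
  also have "\<dots> = lam *\<^sub>R tinv Y x" using tinv_props(1)[OF Y] by simp
  finally show "tinv Y (lam *\<^sub>R x) = lam *\<^sub>R tinv Y x" .
qed

lemma TCT_comp:
  assumes Y1: "(Y1 :: 'a::euclidean_space \<Rightarrow> 'a) \<in> TCT" and Y2: "Y2 \<in> TCT"
  shows "Y1 \<circ> Y2 \<in> TCT"
proof (rule TCT_I)
  have b1: "bij_betw Y1 punctured punctured" using TCT_D(1)[OF Y1] .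
  have b2: "bij_betw Y2 punctured punctured" using TCT_D(1)[OF Y2] .
  show b: "bij_betw (Y1 \<circ> Y2) punctured punctured" using bij_betw_trans[OF b2 b1] .
  show "smooth_on punctured (Y1 \<circ> Y2)"
    using smooth_compose[OF TCT_D(2)[OF Y1] TCT_D(2)[OF Y2]] TCT_nz[OF Y2] by (simp add: o_def)
  have "\<And>y. y \<in> punctured \<Longrightarrow> tinv Y2 (tinv Y1 y) = inv_into punctured (Y1 \<circ> Y2) y"
  proof -
    fix y :: 'a assume y: "y \<in> punctured"
    have inj: "inj_on (Y1 \<circ> Y2) punctured" using b bij_betw_imp_inj_on by blast
    show "tinv Y2 (tinv Y1 y) = inv_into punctured (Y1 \<circ> Y2) y"
      by (rule inv_into_f_eq[OF inj, symmetric])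
         (use y tinv_props[OF Y1] tinv_props[OF Y2] in auto)
  qed
  moreover have "smooth_on punctured (\<lambda>y. tinv Y2 (tinv Y1 y))"
    using smooth_compose[OF TCT_D(2)[OF tinv_TCT[OF Y2]] TCT_D(2)[OF tinv_TCT[OF Y1]]]
      tinv_props(3)[OF Y1] by simp
  ultimately show "smooth_on punctured (inv_into punctured (Y1 \<circ> Y2))"
    using smooth_on_cong by blast
  show "(Y1 \<circ> Y2) 0 = 0" using TCT_D(4)[OF Y1] TCT_D(4)[OF Y2] by simp
  fix x :: 'a and lam :: real assume x: "x \<noteq> 0" and lam: "lam \<noteq> 0"
  show "(Y1 \<circ> Y2) (lam *\<^sub>R x) = lam *\<^sub>R (Y1 \<circ> Y2) x"
    using TCT_D(5)[OF Y2 x lam] TCT_D(5)[OF Y1 TCT_nz[OF Y2 x] lam] by simp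
qed

lemma id_TCT: "(id :: 'a::real_normed_vector \<Rightarrow> 'a) \<in> TCT"
proof (rule TCT_I)
  show "bij_betw id punctured punctured" by simp
  have "smooth_on (punctured::'a set) (\<lambda>x. x)" using smooth_ident[OF open_punctured] .
  then show "smooth_on punctured (id :: 'a \<Rightarrow> 'a)" by (simp add: id_def)
  have "\<And>x::'a. x \<in> punctured \<Longrightarrow> x = inv_into punctured id x"
    by (metis bij_betw_id bij_betw_imp_inj_on id_apply inv_into_f_eq)
  then show "smooth_on punctured (inv_into punctured (id::'a\<Rightarrow>'a))"
    using smooth_on_cong[OF smooth_ident[OF open_punctured]] by blast
qed auto

lemma TCT_carrier[simp]: "carrier TCT_group = TCT" and TCT_mult[simp]: "mult TCT_group = (\<circ>)"
  and TCT_one[simp]: "one TCT_group = id"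
  by (simp_all add: TCT_group_def)

lemma TCT_group: "group (TCT_group :: ('a::euclidean_space \<Rightarrow> 'a) monoid)"
proof (rule groupI)
  fix Y :: "'a \<Rightarrow> 'a" assume Y: "Y \<in> carrier TCT_group"
  have "tinv Y \<circ> Y = id" using tinv_props(1)[of Y] Y by (auto simp: fun_eq_iff)
  then show "\<exists>y\<in>carrier TCT_group. y \<otimes>\<^bsub>TCT_group\<^esub> Y = \<one>\<^bsub>TCT_group\<^esub>"
    using tinv_TCT[of Y] Y by auto
qed (auto simp: TCT_comp id_TCT o_assoc)

lemma TCT_inv:
  assumes "(Y :: 'a::euclidean_space \<Rightarrow> 'a) \<in> TCT"
  shows "inv\<^bsub>TCT_group\<^esub> Y = tinv Y"
proof -
  have "tinv Y \<circ> Y = id" using tinv_props(1)[of Y] assms by (auto simp: fun_eq_iff)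
  then show ?thesis using group.inv_equality[OF TCT_group, of "tinv Y" Y] tinv_TCT[OF assms] assms by simp
qed

lemma N_mk:
  fixes \<rho> :: "'a::euclidean_space \<Rightarrow> real"
  assumes sm: "smooth_on punctured \<rho>" and pos: "\<And>x. x \<noteq> 0 \<Longrightarrow> \<rho> x > 0"
    and hom: "\<And>x lam. x \<noteq> 0 \<Longrightarrow> lam \<noteq> 0 \<Longrightarrow> \<rho> (lam *\<^sub>R x) = \<rho> x"
  shows "(\<lambda>x. \<rho> x *\<^sub>R x) \<in> TCT_N"
proof -
  define n where "n = (\<lambda>x::'a. \<rho> x *\<^sub>R x)"
  define m where "m = (\<lambda>x::'a. inverse (\<rho> x) *\<^sub>R x)"
  have nm: "n (m x) = x" if x: "x \<noteq> 0" for x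
  proof -
    have "\<rho> (m x) = \<rho> x" unfolding m_def using hom[OF x] pos[OF x] by simp
    then show ?thesis using pos[OF x] by (simp add: n_def m_def)
  qed
  have mn: "m (n x) = x" if x: "x \<noteq> 0" for x
  proof -
    have "\<rho> (n x) = \<rho> x" unfolding n_def using hom[OF x] pos[OF x] by simp
    then show ?thesis using pos[OF x] by (simp add: n_def m_def)
  qed
  have nnz: "n x \<noteq> 0" if "x \<noteq> 0" for x using pos[OF that] that by (simp add: n_def)
  have mnz: "m x \<noteq> 0" if "x \<noteq> 0" for x using pos[OF that] that by (simp add: m_def)
  have b: "bij_betw n punctured punctured"
    by (rule bij_betwI[where g=m]) (use nm mn nnz mnz in auto)
  have "n \<in> TCT"
  proof (rule TCT_I[OF b])
    show "smooth_on punctured n" unfolding n_def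
      by (intro smooth_scaleR sm smooth_ident open_punctured)
    have inj: "inj_on n punctured" using b bij_betw_imp_inj_on by blast
    have "\<And>y. y \<in> punctured \<Longrightarrow> m y = inv_into punctured n y"
      using inv_into_f_eq[OF inj] nm mnz by (metis mem_punctured)
    moreover have "smooth_on punctured m" unfolding m_def
      by (intro smooth_scaleR smooth_inverse sm smooth_ident open_punctured) (use pos in force)
    ultimately show "smooth_on punctured (inv_into punctured n)" using smooth_on_cong by blast
    show "n 0 = 0" by (simp add: n_def)
    fix x :: 'a and lam :: real assume "x \<noteq> 0" "lam \<noteq> 0"
    then show "n (lam *\<^sub>R x) = lam *\<^sub>R n x" using hom by (simp add: n_def)
  qed
  then have "(\<lambda>x. \<rho> x *\<^sub>R x) \<in> TCT" by (simp add: n_def)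
  moreover have "\<forall>x. x \<noteq> 0 \<longrightarrow> \<rho> x > 0" using pos by blast
  moreover have "\<forall>x lam. x \<noteq> 0 \<longrightarrow> lam \<noteq> 0 \<longrightarrow> \<rho> (lam *\<^sub>R x) = \<rho> x" using hom by blast
  ultimately show ?thesis unfolding TCT_N_def using sm by (intro CollectI conjI exI[of _ \<rho>]) simp_all
qed

lemma N_D:
  assumes "Y \<in> TCT_N"
  obtains r where "smooth_on punctured r" "\<And>x. x \<noteq> 0 \<Longrightarrow> r x > 0"
    "\<And>x lam. x \<noteq> 0 \<Longrightarrow> lam \<noteq> 0 \<Longrightarrow> r (lam *\<^sub>R x) = r x" "Y = (\<lambda>x. r x *\<^sub>R x)"
proof -
  have "Y \<in> TCT \<and> (\<exists>r. smooth_on punctured r \<and> (\<forall>x. x \<noteq> 0 \<longrightarrow> r x > 0) \<and>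
    (\<forall>x lam. x \<noteq> 0 \<longrightarrow> lam \<noteq> 0 \<longrightarrow> r (lam *\<^sub>R x) = r x) \<and> (\<forall>x. x \<noteq> 0 \<longrightarrow> Y x = r x *\<^sub>R x))"
    using assms unfolding TCT_N_def by (rule CollectD)
  then have Y: "Y \<in> TCT" and ex: "\<exists>r. smooth_on punctured r \<and> (\<forall>x. x \<noteq> 0 \<longrightarrow> r x > 0) \<and>
    (\<forall>x lam. x \<noteq> 0 \<longrightarrow> lam \<noteq> 0 \<longrightarrow> r (lam *\<^sub>R x) = r x) \<and> (\<forall>x. x \<noteq> 0 \<longrightarrow> Y x = r x *\<^sub>R x)"
    by (rule conjunct1, rule conjunct2)
  from ex obtain r where r0: "smooth_on punctured r \<and> (\<forall>x. x \<noteq> 0 \<longrightarrow> r x > 0) \<and>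
    (\<forall>x lam. x \<noteq> 0 \<longrightarrow> lam \<noteq> 0 \<longrightarrow> r (lam *\<^sub>R x) = r x) \<and> (\<forall>x. x \<noteq> 0 \<longrightarrow> Y x = r x *\<^sub>R x)"
    by (rule exE)
  note r = conjunct1[OF r0] conjunct1[OF conjunct2[OF r0]] conjunct1[OF conjunct2[OF conjunct2[OF r0]]]
    conjunct2[OF conjunct2[OF conjunct2[OF r0]]]
  have "Y = (\<lambda>x. r x *\<^sub>R x)"
  proof
    fix x show "Y x = r x *\<^sub>R x" using r(4) TCT_D(4)[OF Y] by (cases "x = 0") auto
  qed
  show ?thesis by (rule that[OF r(1) _ _ \<open>Y = _\<close>]) (use r in auto)
qed

lemma N_sub: "TCT_N \<subseteq> TCT" by (auto simp: TCT_N_def)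

lemma N_comp_eq:
  assumes "\<And>x lam. x \<noteq> 0 \<Longrightarrow> lam \<noteq> 0 \<Longrightarrow> r1 (lam *\<^sub>R x) = r1 x" "\<And>x. x \<noteq> 0 \<Longrightarrow> r2 x > 0"
  shows "(\<lambda>x. r1 x *\<^sub>R x) \<circ> (\<lambda>x. r2 x *\<^sub>R x) = (\<lambda>x. (r1 x * r2 x) *\<^sub>R (x::'a::real_normed_vector))"
proof
  fix x :: 'a show "((\<lambda>x. r1 x *\<^sub>R x) \<circ> (\<lambda>x. r2 x *\<^sub>R x)) x = (r1 x * r2 x) *\<^sub>R x"
    using assms(1)[of x "r2 x"] assms(2)[of x] by (cases "x = 0") auto
qed

lemma N_comp:
  assumes "(Y1 :: 'a::euclidean_space \<Rightarrow> 'a) \<in> TCT_N" "Y2 \<in> TCT_N"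
  shows "Y1 \<circ> Y2 \<in> TCT_N"
proof -
  obtain r1 where r1: "smooth_on punctured r1" "\<And>x. x \<noteq> 0 \<Longrightarrow> r1 x > 0"
    "\<And>x lam. x \<noteq> 0 \<Longrightarrow> lam \<noteq> 0 \<Longrightarrow> r1 (lam *\<^sub>R x) = r1 x" "Y1 = (\<lambda>x. r1 x *\<^sub>R x)"
    using N_D[OF assms(1)] by blast
  obtain r2 where r2: "smooth_on punctured r2" "\<And>x. x \<noteq> 0 \<Longrightarrow> r2 x > 0"
    "\<And>x lam. x \<noteq> 0 \<Longrightarrow> lam \<noteq> 0 \<Longrightarrow> r2 (lam *\<^sub>R x) = r2 x" "Y2 = (\<lambda>x. r2 x *\<^sub>R x)"
    using N_D[OF assms(2)] by blast
  have "(\<lambda>x. (r1 x * r2 x) *\<^sub>R x) \<in> TCT_N"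
    by (rule N_mk) (use r1 r2 smooth_mult in auto)
  then show ?thesis using N_comp_eq[OF r1(3) r2(2)] r1 r2 by simp
qed

lemma N_inv:
  assumes "(Y :: 'a::euclidean_space \<Rightarrow> 'a) \<in> TCT_N"
  shows "inv\<^bsub>TCT_group\<^esub> Y \<in> TCT_N"
proof -
  obtain r where r: "smooth_on punctured r" "\<And>x. x \<noteq> 0 \<Longrightarrow> r x > 0"
    "\<And>x lam. x \<noteq> 0 \<Longrightarrow> lam \<noteq> 0 \<Longrightarrow> r (lam *\<^sub>R x) = r x" "Y = (\<lambda>x. r x *\<^sub>R x)"
    using N_D[OF assms] by blast
  have Z: "(\<lambda>x. inverse (r x) *\<^sub>R x) \<in> TCT_N"
  proof (rule N_mk)
    show "smooth_on punctured (\<lambda>x. inverse (r x))"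
      by (rule smooth_inverse[OF r(1)]) (use r(2) in fastforce)
    show "\<And>x. x \<noteq> 0 \<Longrightarrow> 0 < inverse (r x)" using r(2) by simp
    show "\<And>x lam. x \<noteq> 0 \<Longrightarrow> lam \<noteq> 0 \<Longrightarrow> inverse (r (lam *\<^sub>R x)) = inverse (r x)" using r(3) by simp
  qed
  have "(\<lambda>x. inverse (r x) *\<^sub>R x) \<circ> Y = (\<lambda>x. (inverse (r x) * r x) *\<^sub>R x)"
    unfolding r(4) by (rule N_comp_eq) (use r in auto)
  also have "\<dots> = id"
  proof
    fix x :: 'a show "(inverse (r x) * r x) *\<^sub>R x = id x" using r(2)[of x] by (cases "x = 0") auto
  qed
  finally have "inv\<^bsub>TCT_group\<^esub> Y = (\<lambda>x. inverse (r x) *\<^sub>R x)"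
    using group.inv_equality[OF TCT_group, of "\<lambda>x. inverse (r x) *\<^sub>R x" Y] Z assms N_sub by auto
  then show ?thesis using Z by simp
qed

lemma id_N: "(id :: 'a::euclidean_space \<Rightarrow> 'a) \<in> TCT_N"
proof -
  have "(\<lambda>x::'a. 1 *\<^sub>R x) \<in> TCT_N"
    by (rule N_mk) (auto intro: smooth_const open_punctured)
  then show ?thesis by (simp add: id_def)
qed

lemma N_subgroup: "subgroup TCT_N (TCT_group :: ('a::euclidean_space \<Rightarrow> 'a) monoid)"
  by (rule group.subgroupI[OF TCT_group]) (use N_sub id_N N_comp N_inv in auto)

lemma N_conj:
  assumes g: "(g :: 'a::euclidean_space \<Rightarrow> 'a) \<in> TCT" and Y: "Y \<in> TCT_N"
  shows "g \<circ> Y \<circ> tinv g \<in> TCT_N"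
proof -
  obtain r where r: "smooth_on punctured r" "\<And>x. x \<noteq> 0 \<Longrightarrow> r x > 0"
    "\<And>x lam. x \<noteq> 0 \<Longrightarrow> lam \<noteq> 0 \<Longrightarrow> r (lam *\<^sub>R x) = r x" "Y = (\<lambda>x. r x *\<^sub>R x)"
    using N_D[OF Y] by blast
  have gi: "tinv g \<in> TCT" using tinv_TCT[OF g] .
  have "(\<lambda>x. r (tinv g x) *\<^sub>R x) \<in> TCT_N"
  proof (rule N_mk)
    show "smooth_on punctured (\<lambda>x. r (tinv g x))"
      by (rule smooth_compose[OF r(1) TCT_D(2)[OF gi]]) (use tinv_props(3)[OF g] in simp)
    show "\<And>x. x \<noteq> 0 \<Longrightarrow> 0 < r (tinv g x)" using r(2) tinv_props(3)[OF g] by blast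
    fix x :: 'a and lam :: real assume x: "x \<noteq> 0" and lam: "lam \<noteq> 0"
    show "r (tinv g (lam *\<^sub>R x)) = r (tinv g x)"
      using TCT_D(5)[OF gi x lam] r(3)[OF tinv_props(3)[OF g x] lam] by simp
  qed
  moreover have "g \<circ> Y \<circ> tinv g = (\<lambda>x. r (tinv g x) *\<^sub>R x)"
  proof
    fix x :: 'a
    show "(g \<circ> Y \<circ> tinv g) x = r (tinv g x) *\<^sub>R x"
    proof (cases "x = 0")
      case True then show ?thesis using TCT_D(4)[OF g] by (simp add: r(4) tinv_def)
    next
      case False
      have "g (r (tinv g x) *\<^sub>R tinv g x) = r (tinv g x) *\<^sub>R g (tinv g x)"
        using TCT_D(5)[OF g tinv_props(3)[OF g False]] r(2)[OF tinv_props(3)[OF g False]] by simp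
      then show ?thesis using tinv_props(2)[OF g] by (simp add: r(4))
    qed
  qed
  ultimately show ?thesis by simp
qed

lemma N_normal: "TCT_N \<lhd> (TCT_group :: ('a::euclidean_space \<Rightarrow> 'a) monoid)"
  unfolding group.normal_inv_iff[OF TCT_group]
  using N_subgroup N_conj TCT_inv by fastforce

lemma N_comm: "comm_group ((TCT_group :: ('a::euclidean_space \<Rightarrow> 'a) monoid)\<lparr>carrier := TCT_N\<rparr>)"
proof -
  have grp: "group ((TCT_group :: ('a \<Rightarrow> 'a) monoid)\<lparr>carrier := TCT_N\<rparr>)"
    using subgroup.subgroup_is_group[OF N_subgroup TCT_group] .
  show ?thesis
  proof (rule group.group_comm_groupI[OF grp])
    fix Y1 Y2 :: "'a \<Rightarrow> 'a"
    assume "Y1 \<in> carrier (TCT_group\<lparr>carrier := TCT_N\<rparr>)" "Y2 \<in> carrier (TCT_group\<lparr>carrier := TCT_N\<rparr>)"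
    then have a: "Y1 \<in> TCT_N" "Y2 \<in> TCT_N" by simp_all
    obtain r1 where r1: "smooth_on punctured r1" "\<And>x. x \<noteq> 0 \<Longrightarrow> r1 x > 0"
      "\<And>x lam. x \<noteq> 0 \<Longrightarrow> lam \<noteq> 0 \<Longrightarrow> r1 (lam *\<^sub>R x) = r1 x" "Y1 = (\<lambda>x. r1 x *\<^sub>R x)"
      using N_D[OF a(1)] by blast
    obtain r2 where r2: "smooth_on punctured r2" "\<And>x. x \<noteq> 0 \<Longrightarrow> r2 x > 0"
      "\<And>x lam. x \<noteq> 0 \<Longrightarrow> lam \<noteq> 0 \<Longrightarrow> r2 (lam *\<^sub>R x) = r2 x" "Y2 = (\<lambda>x. r2 x *\<^sub>R x)"
      using N_D[OF a(2)] by blast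
    have "Y1 \<circ> Y2 = Y2 \<circ> Y1"
      using N_comp_eq[of r1 r2, OF r1(3) r2(2)] N_comp_eq[of r2 r1, OF r2(3) r1(2)] r1(4) r2(4)
      by (simp add: mult.commute)
    then show "Y1 \<otimes>\<^bsub>TCT_group\<lparr>carrier := TCT_N\<rparr>\<^esub> Y2 = Y2 \<otimes>\<^bsub>TCT_group\<lparr>carrier := TCT_N\<rparr>\<^esub> Y1"
      by simp
  qed
qed

lemma norm_pos:
  assumes "is_norm nrm" "x \<noteq> 0" shows "nrm x > 0"
proof -
  have h: "\<forall>x. nrm x = 0 \<longleftrightarrow> x = 0" "\<forall>c x. nrm (c *\<^sub>R x) = \<bar>c\<bar> * nrm x"
    "\<forall>x y. nrm (x + y) \<le> nrm x + nrm y" using assms(1) by (simp_all add: is_norm_def)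
  have "nrm (x + (-1) *\<^sub>R x) \<le> nrm x + nrm ((-1) *\<^sub>R x)" using h(3) by blast
  moreover have "nrm ((-1) *\<^sub>R x) = nrm x" using h(2)[rule_format, of "-1" x] by simp
  moreover have "nrm (x + (-1) *\<^sub>R x) = 0" using h(1) by simp
  moreover have "nrm x \<noteq> 0" using h(1) assms(2) by blast
  ultimately show ?thesis by linarith
qed

lemma norm_scale: "is_norm nrm \<Longrightarrow> nrm (c *\<^sub>R x) = \<bar>c\<bar> * nrm x"
  by (simp add: is_norm_def)

lemma H_sub: "TCT_H nrm \<subseteq> TCT" by (auto simp: TCT_H_def)

lemma H_mem:
  assumes "Y \<in> TCT" "\<And>x. x \<noteq> 0 \<Longrightarrow> nrm (Y x) = nrm x"
  shows "Y \<in> TCT_H nrm"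
  using assms TCT_neg[OF assms(1)] by (auto simp: TCT_H_def)

lemma H_D: "Y \<in> TCT_H nrm \<Longrightarrow> x \<noteq> 0 \<Longrightarrow> nrm (Y x) = nrm x"
  by (auto simp: TCT_H_def)

lemma H_subgroup: "subgroup (TCT_H nrm) (TCT_group :: ('a::euclidean_space \<Rightarrow> 'a) monoid)"
proof (rule group.subgroupI[OF TCT_group])
  show "TCT_H nrm \<subseteq> carrier (TCT_group :: ('a \<Rightarrow> 'a) monoid)" using H_sub by simp
  have "(id :: 'a \<Rightarrow> 'a) \<in> TCT_H nrm" by (rule H_mem[OF id_TCT]) simp
  then show "TCT_H nrm \<noteq> ({} :: ('a \<Rightarrow> 'a) set)" by blast
next
  fix Y :: "'a \<Rightarrow> 'a" assume Y: "Y \<in> TCT_H nrm"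
  have YT: "Y \<in> TCT" using Y H_sub by blast
  have "tinv Y \<in> TCT_H nrm"
  proof (rule H_mem[OF tinv_TCT[OF YT]])
    fix x :: 'a assume x: "x \<noteq> 0"
    have "nrm (Y (tinv Y x)) = nrm (tinv Y x)" using H_D[OF Y tinv_props(3)[OF YT x]] .
    then show "nrm (tinv Y x) = nrm x" using tinv_props(2)[OF YT] by simp
  qed
  then show "inv\<^bsub>TCT_group\<^esub> Y \<in> TCT_H nrm" using TCT_inv[OF YT] by simp
next
  fix Y1 Y2 :: "'a \<Rightarrow> 'a" assume Y1: "Y1 \<in> TCT_H nrm" and Y2: "Y2 \<in> TCT_H nrm"
  have T1: "Y1 \<in> TCT" and T2: "Y2 \<in> TCT" using Y1 Y2 H_sub by blast+
  have "Y1 \<circ> Y2 \<in> TCT_H nrm"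
  proof (rule H_mem[OF TCT_comp[OF T1 T2]])
    fix x :: 'a assume x: "x \<noteq> 0"
    show "nrm ((Y1 \<circ> Y2) x) = nrm x" using H_D[OF Y1 TCT_nz[OF T2 x]] H_D[OF Y2 x] by simp
  qed
  then show "Y1 \<otimes>\<^bsub>TCT_group\<^esub> Y2 \<in> TCT_H nrm" by simp
qed

lemma NH_int:
  assumes nrm: "is_norm nrm"
  shows "TCT_N \<inter> TCT_H nrm = {id :: 'a::euclidean_space \<Rightarrow> 'a}"
proof
  show "{id} \<subseteq> TCT_N \<inter> TCT_H nrm" using id_N H_mem[OF id_TCT, of nrm] by simp
next
  show "TCT_N \<inter> TCT_H nrm \<subseteq> {id}"
  proof
    fix Y :: "'a \<Rightarrow> 'a" assume Y: "Y \<in> TCT_N \<inter> TCT_H nrm"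
    obtain r where r: "smooth_on punctured r" "\<And>x. x \<noteq> 0 \<Longrightarrow> r x > 0"
      "\<And>x lam. x \<noteq> 0 \<Longrightarrow> lam \<noteq> 0 \<Longrightarrow> r (lam *\<^sub>R x) = r x" "Y = (\<lambda>x. r x *\<^sub>R x)"
      using N_D[of Y] Y by blast
    have "Y x = x" for x
    proof (cases "x = 0")
      case True then show ?thesis by (simp add: r(4))
    next
      case False
      have "nrm (Y x) = nrm x" using H_D[of Y nrm x] Y False by blast
      then have "r x * nrm x = nrm x" using norm_scale[OF nrm, of "r x" x] r(2)[OF False] by (simp add: r(4))
      then have "r x = 1" using norm_pos[OF nrm False] by simp
      then show ?thesis by (simp add: r(4))
    qed
    then show "Y \<in> {id}" by (auto simp: fun_eq_iff)
  qed
qed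

lemma NH_prod:
  assumes nrm: "is_norm nrm" and snrm: "smooth_on punctured nrm"
  shows "TCT_N <#>\<^bsub>(TCT_group :: ('a::euclidean_space \<Rightarrow> 'a) monoid)\<^esub> TCT_H nrm = TCT"
proof
  show "TCT_N <#>\<^bsub>(TCT_group :: ('a \<Rightarrow> 'a) monoid)\<^esub> TCT_H nrm \<subseteq> TCT"
    unfolding set_mult_def using N_sub H_sub TCT_comp by fastforce
next
  show "TCT \<subseteq> TCT_N <#>\<^bsub>(TCT_group :: ('a \<Rightarrow> 'a) monoid)\<^esub> TCT_H nrm"
  proof
    fix Y :: "'a \<Rightarrow> 'a" assume Y: "Y \<in> TCT"
    have nnz: "\<And>x. x \<noteq> 0 \<Longrightarrow> nrm x \<noteq> 0" using norm_pos[OF nrm] by (metis less_irrefl)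
    define \<rho> where "\<rho> x = nrm (Y x) * inverse (nrm x)" for x
    define n where "n = (\<lambda>x. \<rho> x *\<^sub>R x)"
    have nN: "n \<in> TCT_N" unfolding n_def
    proof (rule N_mk)
      show "smooth_on punctured \<rho>" unfolding \<rho>_def
        by (intro smooth_mult smooth_inverse snrm smooth_compose[OF snrm TCT_D(2)[OF Y]])
           (use TCT_nz[OF Y] nnz in auto)
      show "\<And>x. x \<noteq> 0 \<Longrightarrow> 0 < \<rho> x" unfolding \<rho>_def using TCT_nz[OF Y] norm_pos[OF nrm] by simp
      fix x :: 'a and lam :: real assume x: "x \<noteq> 0" and lam: "lam \<noteq> 0"
      show "\<rho> (lam *\<^sub>R x) = \<rho> x" unfolding \<rho>_def
        using TCT_D(5)[OF Y x lam] norm_scale[OF nrm] lam by simp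
    qed
    have nT: "n \<in> TCT" using nN N_sub by blast
    define h where "h = Y \<circ> tinv n"
    have hT: "h \<in> TCT" unfolding h_def by (rule TCT_comp[OF Y tinv_TCT[OF nT]])
    have hH: "h \<in> TCT_H nrm"
    proof (rule H_mem[OF hT])
      fix x :: 'a assume x: "x \<noteq> 0"
      define z where "z = tinv n x"
      have z: "z \<noteq> 0" using tinv_props(3)[OF nT x] by (simp add: z_def)
      have nz: "n z = x" using tinv_props(2)[OF nT] by (simp add: z_def)
      have rz: "\<rho> z > 0" unfolding \<rho>_def using TCT_nz[OF Y z] norm_pos[OF nrm] z by simp
      have "nrm x = nrm (\<rho> z *\<^sub>R z)" using nz by (simp add: n_def)
      also have "\<dots> = \<rho> z * nrm z" using norm_scale[OF nrm, of "\<rho> z" z] rz by simp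
      also have "\<dots> = nrm (Y z)" using norm_pos[OF nrm z] by (simp add: \<rho>_def)
      finally show "nrm (h x) = nrm x" by (simp add: h_def z_def)
    qed
    define m where "m = h \<circ> n \<circ> tinv h"
    have mN: "m \<in> TCT_N" unfolding m_def by (rule N_conj[OF hT nN])
    have "m \<circ> h = h \<circ> n \<circ> (tinv h \<circ> h)" by (simp add: m_def o_assoc)
    also have "tinv h \<circ> h = id" using tinv_props(1)[OF hT] by (simp add: fun_eq_iff)
    also have "h \<circ> n \<circ> id = Y \<circ> (tinv n \<circ> n)" by (simp add: h_def o_assoc)
    also have "tinv n \<circ> n = id" using tinv_props(1)[OF nT] by (simp add: fun_eq_iff)
    finally have eq: "m \<circ> h = Y" by (simp add: o_def)
    have "m \<circ> h \<in> TCT_N <#>\<^bsub>(TCT_group :: ('a \<Rightarrow> 'a) monoid)\<^esub> TCT_H nrm"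
      unfolding set_mult_def using mN hH by auto
    then show "Y \<in> TCT_N <#>\<^bsub>(TCT_group :: ('a \<Rightarrow> 'a) monoid)\<^esub> TCT_H nrm" using eq by simp
  qed
qed

theorem theorem2:
  fixes nrm :: "real ^ 'n \<Rightarrow> real"
  assumes "is_norm nrm"
    and "smooth_on punctured nrm"
  shows "group (TCT_group :: (real ^ 'n \<Rightarrow> real ^ 'n) monoid)
       \<and> TCT_N \<lhd> (TCT_group :: (real ^ 'n \<Rightarrow> real ^ 'n) monoid)
       \<and> comm_group ((TCT_group :: (real ^ 'n \<Rightarrow> real ^ 'n) monoid)\<lparr>carrier := TCT_N\<rparr>)
       \<and> subgroup (TCT_H nrm) (TCT_group :: (real ^ 'n \<Rightarrow> real ^ 'n) monoid)
       \<and> TCT_N \<inter> TCT_H nrm = {\<one>\<^bsub>(TCT_group :: (real ^ 'n \<Rightarrow> real ^ 'n) monoid)\<^esub>}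
       \<and> TCT_N <#>\<^bsub>(TCT_group :: (real ^ 'n \<Rightarrow> real ^ 'n) monoid)\<^esub> TCT_H nrm
           = carrier (TCT_group :: (real ^ 'n \<Rightarrow> real ^ 'n) monoid)"
  using TCT_group N_normal N_comm H_subgroup[of nrm] NH_int[OF assms(1)] NH_prod[OF assms] by simp

end
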